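(* For every strongly connected component $C$ of $G$, the set $\Delta_C$ is connected.
   Context: $G$ is a finite directed graph (loops allowed) with vertex set $V$. $\Omega$ is the set of bi-infinite paths in $G$, i.e. sequences $(x_i)_{i\in\mathbb Z}\in V^{\mathbb Z}$ such that for every $i$ there is an edge from $x_i$ to $x_{i+1}$. Fix $h>0$. $\bar\Delta$ is the set of functions $x:\mathbb R\to V$ that are constant on each interval $[nh,(n+1)h)$, $n\in\mathbb Z$, and satisfy $(x(ih))_{i\in\mathbb Z}\in\Omega$. $\Delta=\{x(\cdot+t): x\in\bar\Delta,\ t\in\mathbb R\}$, with metric $d(x,y)=\sum_{i\in\mathbb Z}4^{-|i|}\frac1h\int_{ih}^{(i+1)h}\delta(x,y,t)\,dt$, where $\delta(x,y,t)=1$ if $x(t)\ne y(t)$ and $0$ otherwise. A strongly connected component of $G$ is a maximal nonempty set $C\subseteq V$ such that for all $u,v\in C$ (including $u=v$) there is a directed path of positive length from $u$ to $v$ with all vertices in $C$. The lift of $C$ is $\Delta_C=\{f\in\Delta: f(t)\in C \text{ for all } t\in\mathbb R\}$. *)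

theory Defs
  imports "HOL-Analysis.Analysis"
begin

text \<open>A finite directed graph (loops allowed) is given by a finite vertex type 'v
and an edge relation E.\<close>

definition Omega :: "('v \<times> 'v) set \<Rightarrow> (int \<Rightarrow> 'v) set" where
  "Omega E = {x. \<forall>i. (x i, x (i + 1)) \<in> E}"

definition Delta_bar :: "('v \<times> 'v) set \<Rightarrow> real \<Rightarrow> (real \<Rightarrow> 'v) set" where
  "Delta_bar E h = {x. (\<forall>n::int. \<forall>t. real_of_int n * h \<le> t \<and> t < (real_of_int n + 1) * h
                        \<longrightarrow> x t = x (real_of_int n * h))
                   \<and> (\<lambda>i::int. x (real_of_int i * h)) \<in> Omega E}"

definition Delta :: "('v \<times> 'v) set \<Rightarrow> real \<Rightarrow> (real \<Rightarrow> 'v) set" where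
  "Delta E h = {(\<lambda>s. x (s + t)) | x t. x \<in> Delta_bar E h}"

definition traj_dist :: "real \<Rightarrow> (real \<Rightarrow> 'v) \<Rightarrow> (real \<Rightarrow> 'v) \<Rightarrow> real" where
  "traj_dist h x y = (\<Sum>\<^sub>\<infinity>i::int. (1/4) ^ nat \<bar>i\<bar> * (1 / h) *
      integral {real_of_int i * h .. (real_of_int i + 1) * h} (\<lambda>t. if x t \<noteq> y t then 1 else 0))"

definition strongly_conn :: "('v \<times> 'v) set \<Rightarrow> 'v set \<Rightarrow> bool" where
  "strongly_conn E C \<longleftrightarrow> C \<noteq> {} \<and> (\<forall>u\<in>C. \<forall>v\<in>C. (u, v) \<in> (E \<inter> C \<times> C)\<^sup>+)"

definition scc :: "('v \<times> 'v) set \<Rightarrow> 'v set \<Rightarrow> bool" where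
  "scc E C \<longleftrightarrow> strongly_conn E C \<and> (\<forall>D. C \<subseteq> D \<and> strongly_conn E D \<longrightarrow> D = C)"

definition lift :: "('v \<times> 'v) set \<Rightarrow> real \<Rightarrow> 'v set \<Rightarrow> (real \<Rightarrow> 'v) set" where
  "lift E h C = {f \<in> Delta E h. \<forall>t. f t \<in> C}"

end

theory Submission
  imports Defs
begin


lemma floor_div_eq:
  fixes h z :: real and k :: int
  assumes "h > 0" "real_of_int k * h \<le> z" "z < (real_of_int k + 1) * h"
  shows "\<lfloor>z / h\<rfloor> = k"
  using assms by (simp add: floor_eq_iff pos_le_divide_eq pos_divide_less_eq)

lemma floor_div_bounds:
  fixes h z :: real
  assumes "h > 0"
  shows "real_of_int \<lfloor>z / h\<rfloor> * h \<le> z" "z < (real_of_int \<lfloor>z / h\<rfloor> + 1) * h"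
proof -
  have fc: "real_of_int \<lfloor>z / h\<rfloor> \<le> z / h" "z / h < real_of_int \<lfloor>z / h\<rfloor> + 1"
    using floor_correct[of "z/h"] by auto
  then show "real_of_int \<lfloor>z / h\<rfloor> * h \<le> z"
    by (simp add: assms le_divide_eq)
  have "\<not> (real_of_int \<lfloor>z/h\<rfloor> + 1) * h \<le> z"
  proof
    assume "(real_of_int \<lfloor>z/h\<rfloor> + 1) * h \<le> z"
    hence "real_of_int \<lfloor>z/h\<rfloor> + 1 \<le> z/h" using assms by (simp add: le_divide_eq)
    thus False using fc by linarith
  qed
  then show "z < (real_of_int \<lfloor>z / h\<rfloor> + 1) * h" by linarith
qed

definition LS :: "(real \<Rightarrow> 'b) \<Rightarrow> bool" where
  "LS F \<longleftrightarrow> (\<forall>x. \<exists>d>0. \<exists>cl. (\<forall>u. x-d<u \<and> u<x \<longrightarrow> F u = cl) \<and> (\<forall>u. x\<le>u \<and> u<x+d \<longrightarrow> F u = F x))"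

lemma LS_comb:
  assumes "LS F" "LS G"
  shows "LS (\<lambda>u. \<Phi> (F u) (G u))"
  unfolding LS_def
proof
  fix x
  obtain d1 c1 where d1: "d1>0" "\<forall>u. x-d1<u \<and> u<x \<longrightarrow> F u = c1" "\<forall>u. x\<le>u \<and> u<x+d1 \<longrightarrow> F u = F x"
    using assms(1) unfolding LS_def by blast
  obtain d2 c2 where d2: "d2>0" "\<forall>u. x-d2<u \<and> u<x \<longrightarrow> G u = c2" "\<forall>u. x\<le>u \<and> u<x+d2 \<longrightarrow> G u = G x"
    using assms(2) unfolding LS_def by blast
  show "\<exists>d>0. \<exists>cl. (\<forall>u. x-d<u \<and> u<x \<longrightarrow> \<Phi> (F u) (G u) = cl) \<and> (\<forall>u. x\<le>u \<and> u<x+d \<longrightarrow> \<Phi> (F u) (G u) = \<Phi> (F x) (G x))"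
  proof (rule exI[of _ "min d1 d2"], intro conjI exI[of _ "\<Phi> c1 c2"] allI impI)
    show "0 < min d1 d2" using d1 d2 by simp
  next
    fix u assume "x - min d1 d2 < u \<and> u < x"
    then have "x-d1<u \<and> u<x" "x-d2<u \<and> u<x" by auto
    then have "F u = c1" "G u = c2" using d1(2) d2(2) by blast+
    then show "\<Phi> (F u) (G u) = \<Phi> c1 c2" by simp
  next
    fix u assume "x \<le> u \<and> u < x + min d1 d2"
    then have "x\<le>u \<and> u<x+d1" "x\<le>u \<and> u<x+d2" by auto
    then have "F u = F x" "G u = G x" using d1(3) d2(3) by blast+
    then show "\<Phi> (F u) (G u) = \<Phi> (F x) (G x)" by simp
  qed
qed

lemma LS_floor:
  fixes h a :: real
  assumes "h > 0"
  shows "LS (\<lambda>u. Y \<lfloor>(u + a) / h\<rfloor>)"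
  unfolding LS_def
proof
  fix x
  define k where "k = \<lfloor>(x + a) / h\<rfloor>"
  define k' where "k' = \<lceil>(x + a) / h\<rceil> - 1"
  have kb: "real_of_int k * h \<le> x + a" "x + a < (real_of_int k + 1) * h"
    using floor_div_bounds[OF assms, of "x+a"] by (simp_all add: k_def)
  have c1: "real_of_int k' < (x + a) / h" "(x+a)/h \<le> real_of_int k' + 1"
    unfolding k'_def by linarith+
  have kb': "real_of_int k' * h < x + a" "x + a \<le> (real_of_int k' + 1) * h"
    using c1 assms by (simp_all add: pos_less_divide_eq pos_divide_le_eq)
  define d where "d = min ((real_of_int k + 1) * h - a - x) (x + a - real_of_int k' * h)"
  have "d > 0" using kb kb' by (simp add: d_def)
  moreover have "\<forall>u. x-d<u \<and> u<x \<longrightarrow> Y \<lfloor>(u + a) / h\<rfloor> = Y k'"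
  proof (intro allI impI)
    fix u assume "x-d<u \<and> u<x"
    then have "\<lfloor>(u + a) / h\<rfloor> = k'"
      using kb' by (intro floor_div_eq[OF assms]) (auto simp: d_def)
    then show "Y \<lfloor>(u + a) / h\<rfloor> = Y k'" by simp
  qed
  moreover have "\<forall>u. x\<le>u \<and> u<x+d \<longrightarrow> Y \<lfloor>(u + a) / h\<rfloor> = Y \<lfloor>(x + a) / h\<rfloor>"
  proof (intro allI impI)
    fix u assume "x\<le>u \<and> u<x+d"
    then have "\<lfloor>(u + a) / h\<rfloor> = k"
      using kb by (intro floor_div_eq[OF assms]) (auto simp: d_def)
    then show "Y \<lfloor>(u + a) / h\<rfloor> = Y \<lfloor>(x + a) / h\<rfloor>" by (simp add: k_def)
  qed
  ultimately show "\<exists>d>0. \<exists>cl. (\<forall>u. x-d<u \<and> u<x \<longrightarrow> Y \<lfloor>(u + a) / h\<rfloor> = cl) \<and> (\<forall>u. x\<le>u \<and> u<x+d \<longrightarrow> Y \<lfloor>(u + a) / h\<rfloor> = Y \<lfloor>(x + a) / h\<rfloor>)"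
    by blast
qed

lemma LS_integrable:
  fixes F :: "real \<Rightarrow> real"
  assumes "LS F"
  shows "F integrable_on {a..b}"
proof -
  have "F integrable_on cbox a b"
  proof (rule integrable_on_little_subintervals, intro ballI)
    fix x assume "x \<in> cbox a b"
    obtain d cl where d: "d>0" "\<forall>u. x-d<u \<and> u<x \<longrightarrow> F u = cl" "\<forall>u. x\<le>u \<and> u<x+d \<longrightarrow> F u = F x"
      using assms unfolding LS_def by blast
    show "\<exists>d>0. \<forall>u v. x \<in> cbox u v \<and> cbox u v \<subseteq> ball x d \<and> cbox u v \<subseteq> cbox a b \<longrightarrow> F integrable_on cbox u v"
    proof (intro exI[of _ d] conjI allI impI)
      fix u v assume H: "x \<in> cbox u v \<and> cbox u v \<subseteq> ball x d \<and> cbox u v \<subseteq> cbox a b"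
      then have uv: "u \<le> x" "x \<le> v" by auto
      have "u \<in> {u..v}" "v \<in> {u..v}" using uv by auto
      then have "dist x u < d" "dist x v < d" using H by (auto simp: cbox_interval subset_eq)
      then have uv2: "x - d < u" "v < x + d" by (auto simp: dist_real_def)
      have i1: "F integrable_on {u..x}"
      proof (rule integrable_spike[OF integrable_const_ivl negligible_sing])
        fix y assume "y \<in> {u..x} - {x}"
        then show "F y = cl" using d(2) uv2 by auto
      qed
      have i2: "F integrable_on {x..v}"
      proof (rule integrable_spike[OF integrable_const_ivl negligible_empty])
        fix y assume "y \<in> {x..v} - {}"
        then have "x \<le> y \<and> y < x + d" using uv2 by auto
        then show "F y = F x" using d(3) by blast
      qed
      show "F integrable_on cbox u v"
        using Henstock_Kurzweil_Integration.integrable_combine[OF uv i1 i2] by simp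
    qed (use d in auto)
  qed
  then show ?thesis by simp
qed


lemma Delta_iff:
  assumes "h > 0"
  shows "z \<in> Delta E h \<longleftrightarrow> (\<exists>y c. y \<in> Omega E \<and> z = (\<lambda>u. y \<lfloor>(u + c) / h\<rfloor>))"
proof
  assume "z \<in> Delta E h"
  then obtain x t where z: "z = (\<lambda>s. x (s + t))" and x: "x \<in> Delta_bar E h" unfolding Delta_def by blast
  define y where "y = (\<lambda>i::int. x (real_of_int i * h))"
  have y: "y \<in> Omega E" using x unfolding Delta_bar_def y_def by blast
  have xy: "x u = y \<lfloor>u/h\<rfloor>" for u
  proof -
    have "x u = x (real_of_int \<lfloor>u/h\<rfloor> * h)"
      using x floor_div_bounds[OF assms, of u] unfolding Delta_bar_def by blast
    thus ?thesis by (simp add: y_def)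
  qed
  have "z = (\<lambda>u. y \<lfloor>(u+t)/h\<rfloor>)" using z by (simp add: xy)
  then show "\<exists>y c. y \<in> Omega E \<and> z = (\<lambda>u. y \<lfloor>(u + c) / h\<rfloor>)" using y by blast
next
  assume "\<exists>y c. y \<in> Omega E \<and> z = (\<lambda>u. y \<lfloor>(u + c) / h\<rfloor>)"
  then obtain y c where y: "y \<in> Omega E" and z: "z = (\<lambda>u. y \<lfloor>(u + c) / h\<rfloor>)" by blast
  define x where "x = (\<lambda>u. y \<lfloor>u/h\<rfloor>)"
  have fl: "\<lfloor>(real_of_int n * h)/h\<rfloor> = n" for n using assms by simp
  have "x \<in> Delta_bar E h"
    unfolding Delta_bar_def
  proof (intro CollectI conjI allI impI)
    fix n::int and t assume "real_of_int n * h \<le> t \<and> t < (real_of_int n + 1) * h"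
    then have "\<lfloor>t/h\<rfloor> = n" using floor_div_eq[OF assms] by blast
    then show "x t = x (real_of_int n * h)" using assms by (simp add: x_def)
  next
    show "(\<lambda>i. x (real_of_int i * h)) \<in> Omega E" using y assms by (simp add: x_def)
  qed
  moreover have "z = (\<lambda>s. x (s + c))" by (simp add: z x_def)
  ultimately show "z \<in> Delta E h" unfolding Delta_def by blast
qed

lemma lift_iff:
  assumes "h > 0"
  shows "z \<in> lift E h C \<longleftrightarrow> (\<exists>y c. y \<in> Omega E \<and> (\<forall>i. y i \<in> C) \<and> z = (\<lambda>u. y \<lfloor>(u + c) / h\<rfloor>))"
proof
  assume z: "z \<in> lift E h C"
  then obtain y c where y: "y \<in> Omega E" and zz: "z = (\<lambda>u. y \<lfloor>(u + c) / h\<rfloor>)"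
    unfolding lift_def using Delta_iff[OF assms] by blast
  have "y i \<in> C" for i
  proof -
    have "z (real_of_int i * h - c) \<in> C" using z unfolding lift_def by blast
    moreover have "z (real_of_int i * h - c) = y i" using assms by (simp add: zz)
    ultimately show ?thesis by simp
  qed
  then show "\<exists>y c. y \<in> Omega E \<and> (\<forall>i. y i \<in> C) \<and> z = (\<lambda>u. y \<lfloor>(u + c) / h\<rfloor>)"
    using y zz by blast
next
  assume "\<exists>y c. y \<in> Omega E \<and> (\<forall>i. y i \<in> C) \<and> z = (\<lambda>u. y \<lfloor>(u + c) / h\<rfloor>)"
  then obtain y c where y: "y \<in> Omega E" "\<forall>i. y i \<in> C" and zz: "z = (\<lambda>u. y \<lfloor>(u + c) / h\<rfloor>)"
    by blast
  have "z \<in> Delta E h" using Delta_iff[OF assms] y zz by blast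
  moreover have "\<forall>t. z t \<in> C" using y zz by simp
  ultimately show "z \<in> lift E h C" unfolding lift_def by blast
qed

lemma LS_Delta:
  assumes "h > 0" "x \<in> Delta E h"
  shows "LS x"
proof -
  obtain y c where "x = (\<lambda>u. y \<lfloor>(u + c) / h\<rfloor>)" using assms Delta_iff[OF assms(1)] by blast
  then show ?thesis using LS_floor[OF assms(1)] by simp
qed

definition ind :: "(real \<Rightarrow> 'v) \<Rightarrow> (real \<Rightarrow> 'v) \<Rightarrow> real \<Rightarrow> real" where
  "ind x y = (\<lambda>t. if x t \<noteq> y t then 1 else 0)"

lemma LS_ind:
  assumes "LS x" "LS y"
  shows "LS (ind x y)"
  unfolding ind_def using LS_comb[OF assms, of "\<lambda>a b. if a \<noteq> b then 1 else (0::real)"] by simp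

definition trm :: "real \<Rightarrow> (real \<Rightarrow> 'v) \<Rightarrow> (real \<Rightarrow> 'v) \<Rightarrow> int \<Rightarrow> real" where
  "trm h x y i = (1/4) ^ nat \<bar>i\<bar> * (1 / h) * integral {real_of_int i * h .. (real_of_int i + 1) * h} (ind x y)"

lemma traj_dist_term: "traj_dist h x y = infsum (trm h x y) UNIV"
  unfolding traj_dist_def trm_def[abs_def] ind_def by (rule refl)

lemma integral_01:
  fixes F :: "real \<Rightarrow> real"
  assumes "a \<le> b" "\<And>t. 0 \<le> F t" "\<And>t. F t \<le> 1"
  shows "0 \<le> integral {a..b} F" "integral {a..b} F \<le> b - a"
proof -
  have "0 \<le> integral {a..b} F \<and> integral {a..b} F \<le> b - a"
  proof (cases "F integrable_on {a..b}")
    case True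
    have "integral {a..b} F \<le> integral {a..b} (\<lambda>_. 1::real)"
      by (rule integral_le[OF True integrable_const_ivl]) (use assms in auto)
    also have "\<dots> = b - a" using assms(1) by simp
    finally show ?thesis using integral_nonneg[OF True] assms by auto
  next
    case False
    then show ?thesis using assms(1) by (simp add: not_integrable_integral)
  qed
  then show "0 \<le> integral {a..b} F" "integral {a..b} F \<le> b - a" by auto
qed

lemma ind_01: "0 \<le> ind x y t" "ind x y t \<le> 1"
  by (auto simp: ind_def)

lemma term_nonneg:
  assumes "h > 0"
  shows "0 \<le> trm h x y i"
proof -
  have "0 \<le> integral {real_of_int i * h .. (real_of_int i + 1) * h} (ind x y)"
    by (rule integral_01(1)) (use assms ind_01 in auto)
  then show ?thesis unfolding trm_def using assms by (intro mult_nonneg_nonneg) auto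
qed

lemma term_le4:
  assumes "h > 0"
  shows "trm h x y i \<le> (1/4) ^ nat \<bar>i\<bar>"
proof -
  have I: "integral {real_of_int i * h .. (real_of_int i + 1) * h} (ind x y) \<le> h"
  proof -
    have "integral {real_of_int i * h .. (real_of_int i + 1) * h} (ind x y) \<le> (real_of_int i + 1) * h - real_of_int i * h"
      by (rule integral_01(2)) (use assms ind_01 in auto)
    then show ?thesis by (simp add: algebra_simps)
  qed
  have "trm h x y i \<le> (1/4) ^ nat \<bar>i\<bar> * (1/h) * h"
    unfolding trm_def using I assms by (intro mult_left_mono) auto
  also have "\<dots> = (1/4) ^ nat \<bar>i\<bar>" using assms by simp
  finally show ?thesis .
qed

lemma term_le:
  assumes "h > 0"
  shows "trm h x y i \<le> (1/2) ^ nat \<bar>i\<bar>"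
proof -
  have "(1/4::real) ^ nat \<bar>i\<bar> \<le> (1/2) ^ nat \<bar>i\<bar>" by (intro power_mono) auto
  then show ?thesis using term_le4[OF assms, of x y i] by linarith
qed

lemma geo_int:
  fixes q :: real
  assumes "0 < q" "q < 1"
  shows "((\<lambda>i::int. q ^ nat \<bar>i\<bar>) has_sum ((1+q)/(1-q))) UNIV"
proof -
  let ?g = "\<lambda>i::int. q ^ nat \<bar>i\<bar>"
  have s1: "(\<lambda>n::nat. q^n) sums (1/(1-q))" using geometric_sums[of q] assms by simp
  have s2: "(\<lambda>n::nat. q * q^n) sums (q*(1/(1-q)))" using sums_mult[OF s1] .
  have h1: "((\<lambda>n::nat. q^n) has_sum (1/(1-q))) UNIV"
    by (rule sums_nonneg_imp_has_sum[OF s1]) (use assms in auto)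
  have h2: "((\<lambda>n::nat. q*q^n) has_sum (q*(1/(1-q)))) UNIV"
    by (rule sums_nonneg_imp_has_sum[OF s2]) (use assms in auto)
  have A: "(?g has_sum (1/(1-q))) (int ` UNIV)"
    by (subst has_sum_reindex) (auto simp: o_def h1 inj_on_def)
  have "((?g \<circ> (\<lambda>n::nat. - int n - 1)) has_sum (q*(1/(1-q)))) UNIV"
  proof -
    have "(?g \<circ> (\<lambda>n::nat. - int n - 1)) = (\<lambda>n. q * q^n)"
      by (auto simp: o_def nat_add_distrib)
    then show ?thesis using h2 by simp
  qed
  hence B: "(?g has_sum (q*(1/(1-q)))) ((\<lambda>n::nat. - int n - 1) ` UNIV)"
    by (subst has_sum_reindex) (auto simp: inj_on_def)
  have U: "int ` UNIV \<union> (\<lambda>n::nat. - int n - 1) ` UNIV = (UNIV :: int set)"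
  proof -
    have "i \<in> int ` UNIV \<union> (\<lambda>n::nat. - int n - 1) ` UNIV" for i :: int
    proof (cases "i \<ge> 0")
      case True then show ?thesis by (auto intro!: image_eqI[of _ _ "nat i"])
    next
      case False then show ?thesis
        by (intro UnI2 image_eqI[of _ _ "nat (- i - 1)"]) auto
    qed
    then show ?thesis by blast
  qed
  have "(?g has_sum (1/(1-q) + q*(1/(1-q)))) UNIV"
    using has_sum_Un_disjoint[OF A B] U by fastforce
  moreover have "1/(1-q) + q*(1/(1-q)) = (1+q)/(1-q)" using assms by (simp add: field_simps)
  ultimately show ?thesis by simp
qed

lemma infsum_half_bound:
  fixes a :: "int \<Rightarrow> real"
  assumes "\<And>i. 0 \<le> a i" "\<And>i. a i \<le> B * (1/2) ^ nat \<bar>i\<bar>"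
  shows "infsum a UNIV \<le> 3 * B"
proof -
  have g: "((\<lambda>i::int. (1/2::real) ^ nat \<bar>i\<bar>) has_sum 3) UNIV"
    using geo_int[of "1/2"] by simp
  have gB: "((\<lambda>i::int. B * (1/2::real) ^ nat \<bar>i\<bar>) has_sum (B*3)) UNIV"
    using has_sum_cmult_right[OF g] by simp
  have "a summable_on UNIV"
    by (rule summable_on_comparison_test[OF has_sum_imp_summable[OF gB]]) (use assms in auto)
  hence "infsum a UNIV \<le> infsum (\<lambda>i::int. B * (1/2::real) ^ nat \<bar>i\<bar>) UNIV"
    by (intro infsum_mono) (use assms has_sum_imp_summable[OF gB] in auto)
  also have "\<dots> = B*3" using gB by (simp add: infsumI)
  finally show ?thesis by simp
qed


lemma trm_summable:
  assumes "h > 0"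
  shows "trm h x y summable_on UNIV"
proof -
  have g: "((\<lambda>i::int. (1/2::real) ^ nat \<bar>i\<bar>) has_sum 3) UNIV"
    using geo_int[of "1/2"] by simp
  show ?thesis
    by (rule summable_on_comparison_test[OF has_sum_imp_summable[OF g]])
      (use term_le[OF assms] term_nonneg[OF assms] in auto)
qed

lemma traj_nonneg: "h > 0 \<Longrightarrow> 0 \<le> traj_dist h x y"
  unfolding traj_dist_term by (rule infsum_nonneg) (use term_nonneg in auto)

lemma ind_commute: "ind x y = ind y x"
  by (auto simp: ind_def fun_eq_iff)

lemma traj_commute: "traj_dist h x y = traj_dist h y x"
  unfolding traj_dist_term trm_def[abs_def] ind_commute[of x y] ..

lemma traj_self: "traj_dist h x x = 0"
proof -
  have e: "ind x x = (\<lambda>_. 0)" by (auto simp: ind_def)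
  have "trm h x x = (\<lambda>_. 0)" unfolding trm_def[abs_def] e by simp
  then show ?thesis unfolding traj_dist_term by simp
qed

lemma trm_le_dist:
  assumes "h > 0"
  shows "trm h x y i \<le> traj_dist h x y"
proof -
  have "infsum (trm h x y) {i} \<le> infsum (trm h x y) UNIV"
    by (rule infsum_mono_neutral) (use trm_summable[OF assms] term_nonneg[OF assms] in auto)
  then show ?thesis unfolding traj_dist_term by simp
qed

lemma integral_pos:
  fixes F :: "real \<Rightarrow> real"
  assumes "F integrable_on {p..q}" "\<forall>t\<in>{p..q}. 0 \<le> F t" "p \<le> u0" "u0 + e \<le> q" "e > 0"
    "\<forall>t\<in>{u0..u0+e}. F t = 1"
  shows "integral {p..q} F > 0"
proof -
  have i1: "F integrable_on {p..u0}" and i2: "F integrable_on {u0..q}"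
    and i3: "F integrable_on {u0..u0+e}" and i4: "F integrable_on {u0+e..q}"
    using assms by (auto intro: integrable_on_subinterval[OF assms(1)])
  have "integral {p..q} F = integral {p..u0} F + integral {u0..q} F"
    using Henstock_Kurzweil_Integration.integral_combine[of p u0 q F] assms by simp
  also have "integral {u0..q} F = integral {u0..u0+e} F + integral {u0+e..q} F"
    using Henstock_Kurzweil_Integration.integral_combine[of u0 "u0+e" q F] i2 assms by simp
  also have "integral {u0..u0+e} F = integral {u0..u0+e} (\<lambda>_. 1::real)"
    by (rule integral_cong) (use assms(6) in auto)
  also have "\<dots> = e" using assms by simp
  finally have eq: "integral {p..q} F = integral {p..u0} F + (e + integral {u0 + e..q} F)" .
  have "0 \<le> integral {p..u0} F" by (rule integral_nonneg[OF i1]) (use assms in auto)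
  moreover have "0 \<le> integral {u0+e..q} F" by (rule integral_nonneg[OF i4]) (use assms in auto)
  ultimately show ?thesis using eq assms by linarith
qed

lemma LS_pair:
  assumes "LS x" "LS y"
  shows "LS (\<lambda>u. (x u, y u))"
  using LS_comb[OF assms, where \<Phi>=Pair] by simp

lemma traj_zero_imp_eq:
  assumes h: "h > 0" and x: "x \<in> Delta E h" and y: "y \<in> Delta E h" and d0: "traj_dist h x y = 0"
  shows "x = y"
proof (rule ccontr)
  assume "x \<noteq> y"
  then obtain u0 where ne: "x u0 \<noteq> y u0" by auto
  have LSx: "LS x" and LSy: "LS y" using LS_Delta[OF h] x y by auto
  obtain d cl where d: "d > 0" "\<forall>u. u0 \<le> u \<and> u < u0 + d \<longrightarrow> (x u, y u) = (x u0, y u0)"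
    using LS_pair[OF LSx LSy] unfolding LS_def by blast
  define i where "i = \<lfloor>u0/h\<rfloor>"
  have ib: "real_of_int i * h \<le> u0" "u0 < (real_of_int i + 1) * h"
    using floor_div_bounds[OF h, of u0] by (auto simp: i_def)
  define e where "e = min (d/2) ((real_of_int i + 1) * h - u0)"
  have e: "e > 0" "e < d" "u0 + e \<le> (real_of_int i + 1) * h" using d ib by (auto simp: e_def)
  have one: "\<forall>t\<in>{u0..u0+e}. ind x y t = 1"
  proof
    fix t assume "t \<in> {u0..u0+e}"
    then have "u0 \<le> t \<and> t < u0 + d" using e by auto
    then have "(x t, y t) = (x u0, y u0)" using d(2) by blast
    then show "ind x y t = 1" using ne by (auto simp: ind_def)
  qed
  have "integral {real_of_int i * h .. (real_of_int i + 1) * h} (ind x y) > 0"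
    by (rule integral_pos[OF LS_integrable[OF LS_ind[OF LSx LSy]] _ ib(1) e(3) e(1) one])
      (use ind_01 in auto)
  then have "trm h x y i > 0" unfolding trm_def using h by (intro mult_pos_pos) auto
  moreover have "trm h x y i \<le> 0" using trm_le_dist[OF h, of x y i] d0 by simp
  ultimately show False by simp
qed

lemma traj_triangle:
  assumes h: "h > 0" and x: "x \<in> Delta E h" and y: "y \<in> Delta E h" and z: "z \<in> Delta E h"
  shows "traj_dist h x z \<le> traj_dist h x y + traj_dist h y z"
proof -
  have LSx: "LS x" and LSy: "LS y" and LSz: "LS z" using LS_Delta[OF h] x y z by auto
  have pt: "trm h x z i \<le> trm h x y i + trm h y z i" for i
  proof -
    let ?I = "{real_of_int i * h .. (real_of_int i + 1) * h}"
    have ixy: "ind x y integrable_on ?I" and iyz: "ind y z integrable_on ?I" and ixz: "ind x z integrable_on ?I"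
      using LS_integrable LS_ind LSx LSy LSz by blast+
    have "integral ?I (ind x z) \<le> integral ?I (\<lambda>t. ind x y t + ind y z t)"
      by (rule integral_le[OF ixz integrable_add[OF ixy iyz]]) (auto simp: ind_def)
    also have "\<dots> = integral ?I (ind x y) + integral ?I (ind y z)"
      by (rule integral_add[OF ixy iyz])
    finally have le: "integral ?I (ind x z) \<le> integral ?I (ind x y) + integral ?I (ind y z)" .
    have c: "0 \<le> (1/4::real) ^ nat \<bar>i\<bar> * (1 / h)" using h by simp
    show ?thesis unfolding trm_def
      using mult_left_mono[OF le c] by (simp add: distrib_left)
  qed
  have "traj_dist h x z \<le> infsum (\<lambda>i. trm h x y i + trm h y z i) UNIV"
    unfolding traj_dist_term
    by (rule infsum_mono[OF trm_summable[OF h]]) (use pt summable_on_add[OF trm_summable[OF h] trm_summable[OF h]] in auto)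
  also have "\<dots> = traj_dist h x y + traj_dist h y z"
    unfolding traj_dist_term by (rule infsum_add[OF trm_summable[OF h] trm_summable[OF h]])
  finally show ?thesis .
qed

lemma metric: "h > 0 \<Longrightarrow> Metric_space (Delta E h) (traj_dist h)"
  by (unfold_locales)
    (auto simp: traj_nonneg traj_self intro: traj_commute traj_triangle traj_zero_imp_eq)


lemma floor_has_integral:
  fixes h b p :: real
  assumes h: "h > 0"
  shows "((\<lambda>u. real_of_int \<lfloor>(u + b) / h\<rfloor>) has_integral (p + b)) {p..p+h}"
proof -
  define n where "n = \<lfloor>(p + b) / h\<rfloor>"
  have nb: "real_of_int n * h \<le> p + b" "p + b < (real_of_int n + 1) * h"
    using floor_div_bounds[OF h, of "p+b"] by (auto simp: n_def)
  define q where "q = (real_of_int n + 1) * h - b"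
  have pq: "p \<le> q" "q \<le> p + h" using nb by (auto simp: q_def algebra_simps)
  have c1: "((\<lambda>_. real_of_int n) has_integral ((q - p) * real_of_int n)) {p..q}"
    using has_integral_const_real[of "real_of_int n" p q] pq by simp
  have i1: "((\<lambda>u. real_of_int \<lfloor>(u + b) / h\<rfloor>) has_integral ((q - p) * real_of_int n)) {p..q}"
  proof (rule has_integral_spike[OF negligible_sing _ c1])
    fix u assume "u \<in> {p..q} - {q}"
    then have "p \<le> u" "u < q" by auto
    then have "\<lfloor>(u + b) / h\<rfloor> = n" using nb by (intro floor_div_eq[OF h]) (auto simp: q_def)
    then show "real_of_int \<lfloor>(u + b) / h\<rfloor> = real_of_int n" by simp
  qed
  have c2: "((\<lambda>_. real_of_int n + 1) has_integral ((p + h - q) * (real_of_int n + 1))) {q..p+h}"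
    using has_integral_const_real[of "real_of_int n + 1" q "p+h"] pq by simp
  have i2: "((\<lambda>u. real_of_int \<lfloor>(u + b) / h\<rfloor>) has_integral ((p + h - q) * (real_of_int n + 1))) {q..p+h}"
  proof (rule has_integral_spike[OF negligible_empty _ c2])
    fix u assume "u \<in> {q..p+h} - {}"
    then have "q \<le> u" "u \<le> p + h" by auto
    then have "\<lfloor>(u + b) / h\<rfloor> = n + 1" using nb by (intro floor_div_eq[OF h]) (auto simp: q_def algebra_simps)
    then show "real_of_int \<lfloor>(u + b) / h\<rfloor> = real_of_int n + 1" by simp
  qed
  have "((\<lambda>u. real_of_int \<lfloor>(u + b) / h\<rfloor>) has_integral ((q - p) * real_of_int n + (p + h - q) * (real_of_int n + 1))) {p..p+h}"
    by (rule Henstock_Kurzweil_Integration.has_integral_combine[OF pq i1 i2])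
  moreover have "(q - p) * real_of_int n + (p + h - q) * (real_of_int n + 1) = p + b"
    by (simp add: q_def algebra_simps)
  ultimately show ?thesis by simp
qed

lemma ind_shift_le:
  fixes h a b p :: real
  assumes h: "h > 0" and ab: "a \<le> b"
  shows "integral {p..p+h} (ind (\<lambda>u. Y \<lfloor>(u + a) / h\<rfloor>) (\<lambda>u. Y \<lfloor>(u + b) / h\<rfloor>)) \<le> b - a"
proof -
  let ?G = "\<lambda>u. real_of_int \<lfloor>(u + b) / h\<rfloor> - real_of_int \<lfloor>(u + a) / h\<rfloor>"
  have G: "(?G has_integral ((p + b) - (p + a))) {p..p+h}"
    by (rule has_integral_diff[OF floor_has_integral[OF h] floor_has_integral[OF h]])
  have LS: "LS (ind (\<lambda>u. Y \<lfloor>(u + a) / h\<rfloor>) (\<lambda>u. Y \<lfloor>(u + b) / h\<rfloor>))"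
    by (rule LS_ind[OF LS_floor[OF h] LS_floor[OF h]])
  have le: "ind (\<lambda>u. Y \<lfloor>(u + a) / h\<rfloor>) (\<lambda>u. Y \<lfloor>(u + b) / h\<rfloor>) u \<le> ?G u" for u
  proof -
    have "(u + a) / h \<le> (u + b) / h" using ab h by (simp add: divide_right_mono)
    then have m: "\<lfloor>(u + a) / h\<rfloor> \<le> \<lfloor>(u + b) / h\<rfloor>" by (rule floor_mono)
    show ?thesis
    proof (cases "\<lfloor>(u + a) / h\<rfloor> = \<lfloor>(u + b) / h\<rfloor>")
      case True then show ?thesis by (simp add: ind_def)
    next
      case False
      then have "\<lfloor>(u + a) / h\<rfloor> + 1 \<le> \<lfloor>(u + b) / h\<rfloor>" using m by linarith
      then have "1 \<le> ?G u" by linarith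
      then show ?thesis by (auto simp: ind_def)
    qed
  qed
  have "integral {p..p+h} (ind (\<lambda>u. Y \<lfloor>(u + a) / h\<rfloor>) (\<lambda>u. Y \<lfloor>(u + b) / h\<rfloor>)) \<le> integral {p..p+h} ?G"
    by (rule integral_le[OF LS_integrable[OF LS] has_integral_integrable[OF G]]) (use le in auto)
  also have "\<dots> = b - a" using integral_unique[OF G] by simp
  finally show ?thesis .
qed

lemma traj_shift_le:
  assumes h: "h > 0"
  shows "traj_dist h (\<lambda>u. Y \<lfloor>(u + a) / h\<rfloor>) (\<lambda>u. Y \<lfloor>(u + b) / h\<rfloor>) \<le> 3 * (\<bar>b - a\<bar> / h)"
proof -
  have main: "traj_dist h (\<lambda>u. Y \<lfloor>(u + a) / h\<rfloor>) (\<lambda>u. Y \<lfloor>(u + b) / h\<rfloor>) \<le> 3 * ((b - a) / h)"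
    if ab: "a \<le> b" for a b
  proof -
    have "trm h (\<lambda>u. Y \<lfloor>(u + a) / h\<rfloor>) (\<lambda>u. Y \<lfloor>(u + b) / h\<rfloor>) i \<le> (b - a) / h * (1/2) ^ nat \<bar>i\<bar>" for i
    proof -
      have I: "integral {real_of_int i * h .. (real_of_int i + 1) * h} (ind (\<lambda>u. Y \<lfloor>(u + a) / h\<rfloor>) (\<lambda>u. Y \<lfloor>(u + b) / h\<rfloor>)) \<le> b - a"
        using ind_shift_le[OF h ab, of "real_of_int i * h" Y] by (simp add: algebra_simps)
      have "trm h (\<lambda>u. Y \<lfloor>(u + a) / h\<rfloor>) (\<lambda>u. Y \<lfloor>(u + b) / h\<rfloor>) i \<le> (1/4) ^ nat \<bar>i\<bar> * (1/h) * (b - a)"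
        unfolding trm_def using I h by (intro mult_left_mono) auto
      also have "\<dots> \<le> (1/2) ^ nat \<bar>i\<bar> * (1/h) * (b - a)"
        using h ab by (intro mult_right_mono power_mono) auto
      finally show ?thesis by (simp add: field_simps)
    qed
    then show ?thesis unfolding traj_dist_term
      by (intro infsum_half_bound) (use term_nonneg[OF h] in auto)
  qed
  show ?thesis
  proof (cases "a \<le> b")
    case True then show ?thesis using main[OF True] by simp
  next
    case False
    then have "b \<le> a" by simp
    from main[OF this] show ?thesis by (subst traj_commute) (use False in simp)
  qed
qed

lemma traj_tail:
  fixes K :: nat
  assumes h: "h > 0" and agree: "\<forall>u. - (real K * h) \<le> u \<and> u \<le> (real K + 1) * h \<longrightarrow> x u = y u"
  shows "traj_dist h x y \<le> 3 * (1/2) ^ K"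
proof -
  have "trm h x y i \<le> (1/2) ^ K * (1/2) ^ nat \<bar>i\<bar>" for i
  proof (cases "nat \<bar>i\<bar> \<le> K")
    case True
    then have iK: "- int K \<le> i" "i \<le> int K" by auto
    have "real_of_int i \<ge> - real K" "real_of_int i \<le> real K" using iK by linarith+
    then have "\<forall>t\<in>{real_of_int i * h .. (real_of_int i + 1) * h}. ind x y t = 0"
    proof (intro ballI)
      fix t assume t: "t \<in> {real_of_int i * h .. (real_of_int i + 1) * h}"
        and "real_of_int i \<ge> - real K" "real_of_int i \<le> real K"
      have m1: "- real K * h \<le> real_of_int i * h"
        using mult_right_mono[of "- real K" "real_of_int i" h] h \<open>real_of_int i \<ge> - real K\<close> by simp
      have m2: "(real_of_int i + 1) * h \<le> (real K + 1) * h"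
        using mult_right_mono[of "real_of_int i + 1" "real K + 1" h] h \<open>real_of_int i \<le> real K\<close> by simp
      have "- (real K * h) \<le> t \<and> t \<le> (real K + 1) * h"
        using m1 m2 t by auto
      then show "ind x y t = 0" using agree by (auto simp: ind_def)
    qed
    then have "integral {real_of_int i * h .. (real_of_int i + 1) * h} (ind x y) = 0"
      using integral_cong[of "{real_of_int i * h .. (real_of_int i + 1) * h}" "ind x y" "\<lambda>_. 0"] by simp
    then have "trm h x y i = 0" by (simp add: trm_def)
    then show ?thesis by simp
  next
    case False
    have "trm h x y i \<le> (1/4) ^ nat \<bar>i\<bar>" by (rule term_le4[OF h])
    also have "\<dots> = (1/2) ^ nat \<bar>i\<bar> * (1/2) ^ nat \<bar>i\<bar>" by (simp add: power_mult_distrib[symmetric])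
    also have "\<dots> \<le> (1/2) ^ K * (1/2) ^ nat \<bar>i\<bar>"
      using False by (intro mult_right_mono power_decreasing) auto
    finally show ?thesis .
  qed
  then show ?thesis unfolding traj_dist_term
    by (intro infsum_half_bound) (use term_nonneg[OF h] in auto)
qed


lemma approx:
  assumes h: "h > 0" and sc: "scc E C" and f: "f \<in> lift E h C" and g: "g \<in> lift E h C" and r: "r > 0"
  shows "\<exists>Y a b. Y \<in> Omega E \<and> (\<forall>i. Y i \<in> C) \<and> traj_dist h f (\<lambda>u. Y \<lfloor>(u + a) / h\<rfloor>) < r
             \<and> traj_dist h g (\<lambda>u. Y \<lfloor>(u + b) / h\<rfloor>) < r"
proof -
  obtain p c1 where p: "p \<in> Omega E" "\<forall>i. p i \<in> C" and fp: "f = (\<lambda>u. p \<lfloor>(u + c1) / h\<rfloor>)"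
    using f lift_iff[OF h] by blast
  obtain q c2 where q: "q \<in> Omega E" "\<forall>i. q i \<in> C" and gq: "g = (\<lambda>u. q \<lfloor>(u + c2) / h\<rfloor>)"
    using g lift_iff[OF h] by blast
  obtain K where K: "(1/2::real) ^ K < r / 3" using real_arch_pow_inv[of "r/3" "1/2"] r by auto
  define N1 where "N1 = \<lfloor>((real K + 1) * h + c1) / h\<rfloor>"
  define N2 where "N2 = \<lfloor>(- (real K * h) + c2) / h\<rfloor>"
  have "(p N1, q N2) \<in> (E \<inter> C \<times> C)\<^sup>+"
    using sc p q unfolding scc_def strongly_conn_def by blast
  then obtain m where m: "m > 0" "(p N1, q N2) \<in> (E \<inter> C \<times> C) ^^ m"
    using trancl_power by blast
  then obtain w where w: "w 0 = p N1" "w m = q N2" "\<forall>i<m. (w i, w (Suc i)) \<in> E \<inter> C \<times> C"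
    using m(2) unfolding relpow_fun_conv by blast
  define S where "S = N1 + int m - N2"
  define Y where "Y = (\<lambda>i. if i \<le> N1 then p i else if i \<le> N1 + int m then w (nat (i - N1)) else q (i - S))"
  have Y1: "Y i = p i" if "i \<le> N1" for i using that by (simp add: Y_def)
  have Y2: "Y i = w (nat (i - N1))" if "N1 \<le> i" "i \<le> N1 + int m" for i
    using that w(1) by (auto simp: Y_def)
  have Y3: "Y i = q (i - S)" if "N1 + int m \<le> i" for i
  proof (cases "i = N1 + int m")
    case True
    then have "Y i = w m" using Y2[of i] m by simp
    also have "\<dots> = q (i - S)" using True w(2) by (simp add: S_def)
    finally show ?thesis .
  next
    case False then show ?thesis using that m by (simp add: Y_def)
  qed
  have wC: "w k \<in> C" if "k \<le> m" for k
  proof (cases "k < m")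
    case True then show ?thesis using w(3) by blast
  next
    case False then have "k = m" using that by simp
    then show ?thesis using w(2) q by simp
  qed
  have YO: "Y \<in> Omega E"
    unfolding Omega_def
  proof (intro CollectI allI)
    fix i
    show "(Y i, Y (i + 1)) \<in> E"
    proof (cases "i < N1")
      case True
      then show ?thesis using Y1[of i] Y1[of "i+1"] p(1) by (simp add: Omega_def)
    next
      case False
      show ?thesis
      proof (cases "i < N1 + int m")
        case True
        have "Y i = w (nat (i - N1))" using False True by (intro Y2) auto
        moreover have "Y (i+1) = w (Suc (nat (i - N1)))"
        proof -
          have "Y (i+1) = w (nat (i + 1 - N1))" using False True by (intro Y2) auto
          moreover have "nat (i + 1 - N1) = Suc (nat (i - N1))" using False by linarith
          ultimately show ?thesis by simp
        qed
        moreover have "nat (i - N1) < m" using False True by linarith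
        ultimately show ?thesis using w(3) by auto
      next
        case False2: False
        have "(q (i - S), q (i - S + 1)) \<in> E" using q(1) by (simp add: Omega_def)
        moreover have "i - S + 1 = i + 1 - S" by simp
        ultimately show ?thesis using False2 Y3[of i] Y3[of "i+1"] by simp
      qed
    qed
  qed
  have YC: "\<forall>i. Y i \<in> C"
  proof
    fix i
    show "Y i \<in> C"
    proof (cases "i \<le> N1")
      case True then show ?thesis using Y1 p by simp
    next
      case False
      show ?thesis
      proof (cases "i \<le> N1 + int m")
        case True
        have "nat (i - N1) \<le> m" using True by linarith
        then show ?thesis using Y2[of i] False True wC[of "nat (i - N1)"] by simp
      next
        case False then show ?thesis using Y3[of i] q by simp
      qed
    qed
  qed
  have d1: "traj_dist h f (\<lambda>u. Y \<lfloor>(u + c1) / h\<rfloor>) \<le> 3 * (1/2) ^ K"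
  proof (rule traj_tail[OF h], intro allI impI)
    fix u assume u: "- (real K * h) \<le> u \<and> u \<le> (real K + 1) * h"
    have "(u + c1) / h \<le> ((real K + 1) * h + c1) / h" using u h by (intro divide_right_mono) auto
    then have "\<lfloor>(u + c1) / h\<rfloor> \<le> N1" unfolding N1_def by (rule floor_mono)
    then show "f u = Y \<lfloor>(u + c1) / h\<rfloor>" using Y1 fp by simp
  qed
  have d2: "traj_dist h g (\<lambda>u. Y \<lfloor>(u + (c2 + real_of_int S * h)) / h\<rfloor>) \<le> 3 * (1/2) ^ K"
  proof (rule traj_tail[OF h], intro allI impI)
    fix u assume u: "- (real K * h) \<le> u \<and> u \<le> (real K + 1) * h"
    have "(- (real K * h) + c2) / h \<le> (u + c2) / h" using u h by (intro divide_right_mono) auto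
    then have n2: "N2 \<le> \<lfloor>(u + c2) / h\<rfloor>" unfolding N2_def by (rule floor_mono)
    have "(u + (c2 + real_of_int S * h)) / h = (u + c2) / h + real_of_int S"
      using h by (simp add: field_simps)
    then have fl: "\<lfloor>(u + (c2 + real_of_int S * h)) / h\<rfloor> = \<lfloor>(u + c2) / h\<rfloor> + S"
      by (metis floor_add_int)
    have "N1 + int m \<le> \<lfloor>(u + c2) / h\<rfloor> + S" using n2 by (simp add: S_def)
    then have "Y (\<lfloor>(u + c2) / h\<rfloor> + S) = q \<lfloor>(u + c2) / h\<rfloor>" using Y3 by simp
    then show "g u = Y \<lfloor>(u + (c2 + real_of_int S * h)) / h\<rfloor>" using fl gq by simp
  qed
  have "3 * (1/2::real) ^ K < r" using K by simp
  then show ?thesis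
    by (intro exI[of _ Y] exI[of _ c1] exI[of _ "c2 + real_of_int S * h"] conjI YO YC)
      (use d1 d2 in linarith)+
qed


theorem mainTheorem8:
  fixes E :: "('v::finite \<times> 'v) set" and h :: real and C :: "'v set"
  assumes "h > 0" and "scc E C"
  shows "connectedin (Metric_space.mtopology (Delta E h) (traj_dist h)) (lift E h C)"
proof -
  have h: "h > 0" using assms(1) .
  interpret MS: Metric_space "Delta E h" "traj_dist h" by (rule metric[OF h])
  have sub: "lift E h C \<subseteq> Delta E h" by (auto simp: lift_def)
  show ?thesis
    unfolding connectedin MS.topspace_mtopology
  proof (intro conjI sub notI)
    assume "\<exists>E1 E2. openin MS.mtopology E1 \<and> openin MS.mtopology E2 \<and>
        lift E h C \<subseteq> E1 \<union> E2 \<and> E1 \<inter> E2 \<inter> lift E h C = {} \<and> E1 \<inter> lift E h C \<noteq> {} \<and> E2 \<inter> lift E h C \<noteq> {}"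
    then obtain E1 E2 where o1: "openin MS.mtopology E1" and o2: "openin MS.mtopology E2"
      and cov: "lift E h C \<subseteq> E1 \<union> E2" and dis: "E1 \<inter> E2 \<inter> lift E h C = {}"
      and ne1: "E1 \<inter> lift E h C \<noteq> {}" and ne2: "E2 \<inter> lift E h C \<noteq> {}" by blast
    obtain f where f: "f \<in> E1" "f \<in> lift E h C" using ne1 by blast
    obtain g where g: "g \<in> E2" "g \<in> lift E h C" using ne2 by blast
    obtain r1 where r1: "r1 > 0" "MS.mball f r1 \<subseteq> E1" using o1 f(1) MS.openin_mtopology by blast
    obtain r2 where r2: "r2 > 0" "MS.mball g r2 \<subseteq> E2" using o2 g(1) MS.openin_mtopology by blast
    define r where "r = min r1 r2"
    have r: "r > 0" using r1 r2 by (simp add: r_def)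
    obtain Y a b where Y: "Y \<in> Omega E" "\<forall>i. Y i \<in> C"
      and da: "traj_dist h f (\<lambda>u. Y \<lfloor>(u + a) / h\<rfloor>) < r"
      and db: "traj_dist h g (\<lambda>u. Y \<lfloor>(u + b) / h\<rfloor>) < r"
      using approx[OF h assms(2) f(2) g(2) r] by blast
    define Z where "Z t = (\<lambda>u. Y \<lfloor>(u + t) / h\<rfloor>)" for t
    have ZL: "Z t \<in> lift E h C" for t
      unfolding Z_def using lift_iff[OF h] Y by blast
    have ZD: "Z t \<in> Delta E h" for t using ZL sub by blast
    have opn: "open {t. Z t \<in> U}" if oU: "openin MS.mtopology U" for U
      unfolding open_dist
    proof (intro ballI)
      fix t assume "t \<in> {t. Z t \<in> U}"
      then obtain \<rho> where rho: "\<rho> > 0" "MS.mball (Z t) \<rho> \<subseteq> U"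
        using oU MS.openin_mtopology by blast
      show "\<exists>e>0. \<forall>s. dist s t < e \<longrightarrow> s \<in> {t. Z t \<in> U}"
      proof (intro exI[of _ "\<rho> * h / 3"] conjI allI impI)
        show "\<rho> * h / 3 > 0" using rho h by simp
      next
        fix s assume "dist s t < \<rho> * h / 3"
        then have "\<bar>s - t\<bar> < \<rho> * h / 3" by (simp add: dist_real_def)
        then have "3 * (\<bar>s - t\<bar> / h) < \<rho>" using h by (simp add: field_simps)
        moreover have "traj_dist h (Z t) (Z s) \<le> 3 * (\<bar>s - t\<bar> / h)"
          unfolding Z_def by (rule traj_shift_le[OF h])
        ultimately have "traj_dist h (Z t) (Z s) < \<rho>" by linarith
        then have "Z s \<in> MS.mball (Z t) \<rho>" using ZD by simp
        then show "s \<in> {t. Z t \<in> U}" using rho by blast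
      qed
    qed
    have "{t. Z t \<in> E1} \<inter> {t. Z t \<in> E2} \<inter> UNIV = {}" using dis ZL by blast
    moreover have "UNIV \<subseteq> {t. Z t \<in> E1} \<union> {t. Z t \<in> E2}" using cov ZL by blast
    ultimately have "{t. Z t \<in> E1} \<inter> UNIV = {} \<or> {t. Z t \<in> E2} \<inter> UNIV = {}"
      using connectedD[OF connected_UNIV opn[OF o1] opn[OF o2]] by blast
    moreover have "a \<in> {t. Z t \<in> E1}"
    proof -
      have "traj_dist h f (Z a) < r1" using da r_def unfolding Z_def by linarith
      then have "Z a \<in> MS.mball f r1" using ZD f sub by auto
      then show ?thesis using r1 by blast
    qed
    moreover have "b \<in> {t. Z t \<in> E2}"
    proof -
      have "traj_dist h g (Z b) < r2" using db r_def unfolding Z_def by linarith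
      then have "Z b \<in> MS.mball g r2" using ZD g sub by auto
      then show ?thesis using r2 by blast
    qed
    ultimately show False by blast
  qed
qed

end
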